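(* Every 2-local derivation of a finite dimensional formally real Jordan algebra $\mathcal{A}$ is a derivation.
   Context: A real Jordan algebra is formally real if $\sum_i a_i^2=0$ (finite sum) implies each $a_i=0$. A derivation is a linear map $D$ with $D(xy)=D(x)y+xD(y)$. A 2-local derivation is a map $\Delta:\mathcal{A}\to\mathcal{A}$ (not assumed linear) such that for every $x,y\in\mathcal{A}$ there is a derivation $D_{x,y}$ with $\Delta(x)=D_{x,y}(x)$ and $\Delta(y)=D_{x,y}(y)$. *)

theory Defs
  imports "HOL-Analysis.Analysis"
begin

definition real_algebra :: "('a::real_vector \<Rightarrow> 'a \<Rightarrow> 'a) \<Rightarrow> bool" where
  "real_algebra m \<longleftrightarrow> (\<forall>z. linear (\<lambda>x. m x z)) \<and> (\<forall>x. linear (\<lambda>z. m x z))"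

definition jordan_algebra :: "('a::real_vector \<Rightarrow> 'a \<Rightarrow> 'a) \<Rightarrow> bool" where
  "jordan_algebra m \<longleftrightarrow> real_algebra m \<and> (\<forall>x y. m x y = m y x) \<and>
     (\<forall>x y. m (m x y) (m x x) = m x (m y (m x x)))"

definition finite_dimensional_space :: "'a::real_vector itself \<Rightarrow> bool" where
  "finite_dimensional_space _ \<longleftrightarrow> (\<exists>B::'a set. finite B \<and> span B = UNIV)"

definition formally_real :: "('a::real_vector \<Rightarrow> 'a \<Rightarrow> 'a) \<Rightarrow> bool" where
  "formally_real m \<longleftrightarrow>
     (\<forall>(n::nat) (a::nat \<Rightarrow> 'a). (\<Sum>i<n. m (a i) (a i)) = 0 \<longrightarrow> (\<forall>i<n. a i = 0))"

definition derivation :: "('a::real_vector \<Rightarrow> 'a \<Rightarrow> 'a) \<Rightarrow> ('a \<Rightarrow> 'a) \<Rightarrow> bool" where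
  "derivation m D \<longleftrightarrow> linear D \<and> (\<forall>x y. D (m x y) = m (D x) y + m x (D y))"

definition two_local_derivation :: "('a::real_vector \<Rightarrow> 'a \<Rightarrow> 'a) \<Rightarrow> ('a \<Rightarrow> 'a) \<Rightarrow> bool" where
  "two_local_derivation m \<Delta> \<longleftrightarrow>
     (\<forall>x y. \<exists>D. derivation m D \<and> \<Delta> x = D x \<and> \<Delta> y = D y)"

end

theory Submission
  imports Defs "HOL-Computational_Algebra.Fundamental_Theorem_Algebra"
begin


primrec pw :: "('a \<Rightarrow> 'a \<Rightarrow> 'a) \<Rightarrow> 'a \<Rightarrow> nat \<Rightarrow> 'a" where
  "pw m x 0 = x" | "pw m x (Suc n) = m x (pw m x n)"

lemma mp_mult: "map_poly complex_of_real (p*q) = map_poly of_real p * map_poly of_real q"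
  by (rule poly_eqI) (simp add: coeff_map_poly coeff_mult)

lemma mp_add: "map_poly complex_of_real (p+q) = map_poly of_real p + map_poly of_real q"
  by (rule poly_eqI) (simp add: coeff_map_poly)

lemma mp_poly_real: "poly (map_poly complex_of_real p) (of_real r) = of_real (poly p r)"
  by (induction p) (auto simp: map_poly_pCons)

lemma deg1_form: "degree (r::real poly) < 2 \<Longrightarrow> r = [:coeff r 0, coeff r 1:]"
  by (rule poly_eqI) (auto simp: coeff_pCons coeff_eq_0 split: nat.split)

lemma quad_root:
  "poly (map_poly complex_of_real [:(Re z)^2 + (Im z)^2, -2*Re z, 1:]) z = 0"
  by (simp add: map_poly_pCons complex_eq_iff power2_eq_square algebra_simps)

locale jord =
  fixes m :: "'a::real_vector \<Rightarrow> 'a \<Rightarrow> 'a"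
  assumes JA: "jordan_algebra m"
begin

lemma linL: "linear (\<lambda>x. m x z)" using JA by (auto simp: jordan_algebra_def real_algebra_def)
lemma linR: "linear (\<lambda>z. m x z)" using JA by (auto simp: jordan_algebra_def real_algebra_def)
lemma comm: "m x y = m y x" using JA by (auto simp: jordan_algebra_def)
lemma jid: "m (m x y) (m x x) = m x (m y (m x x))" using JA by (auto simp: jordan_algebra_def)

lemma addL[simp]: "m (a + b) c = m a c + m b c" using linear_add[OF linL] by blast
lemma addR[simp]: "m c (a + b) = m c a + m c b" using linear_add[OF linR] by blast
lemma diffL[simp]: "m (a - b) c = m a c - m b c" using linear_diff[OF linL] by blast
lemma diffR[simp]: "m c (a - b) = m c a - m c b" using linear_diff[OF linR] by blast
lemma scL[simp]: "m (r *\<^sub>R a) c = r *\<^sub>R m a c" using linear_scale[OF linL] by blast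
lemma scR[simp]: "m c (r *\<^sub>R a) = r *\<^sub>R m c a" using linear_scale[OF linR] by blast
lemma negL[simp]: "m (- a) c = - m a c" using linear_neg[OF linL] by blast
lemma negR[simp]: "m c (- a) = - m c a" using linear_neg[OF linR] by blast
lemma zeroL[simp]: "m 0 c = 0" using linear_0[OF linL] by blast
lemma zeroR[simp]: "m c 0 = 0" using linear_0[OF linR] by blast

definition "JJ x y = m (m x y) (m x x) - m x (m y (m x x))"
definition "AA x z y = m (m z y) (m x x) + 2 *\<^sub>R m (m x y) (m x z) - m z (m y (m x x)) - 2 *\<^sub>R m x (m y (m x z))"

lemma JJ0: "JJ x y = 0" using jid by (simp add: JJ_def)

lemma AA_expand: "JJ (x + z) y - JJ (x - z) y = 2 *\<^sub>R AA x z y + 2 *\<^sub>R JJ z y"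
  unfolding JJ_def AA_def
  by (simp add: algebra_simps scaleR_2 comm[of z x] comm[of y x] comm[of z y])

lemma AA0: "AA x z y = 0"
proof -
  have "2 *\<^sub>R AA x z y = 0" using AA_expand[of x z y] by (simp add: JJ0)
  thus ?thesis by simp
qed

lemma E1: "m (m z y) (m x x) + 2 *\<^sub>R m (m x y) (m x z) = m z (m y (m x x)) + 2 *\<^sub>R m x (m y (m x z))"
  using AA0[of x z y] unfolding AA_def by (simp add: algebra_simps)

lemma E2_expand: "AA (a + b) z y - AA a z y - AA b z y =
  2 *\<^sub>R (m (m z y) (m a b) + m (m a y) (m b z) + m (m b y) (m a z) - m z (m y (m a b)) - m a (m y (m b z)) - m b (m y (m a z)))"
  unfolding AA_def
  by (simp add: algebra_simps scaleR_2 comm[of b a] comm[of z a] comm[of z b] comm[of y a] comm[of y b] comm[of z y])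

lemma E2: "m (m z y) (m a b) + m (m a y) (m b z) + m (m b y) (m a z) = m z (m y (m a b)) + m a (m y (m b z)) + m b (m y (m a z))"
proof -
  have "2 *\<^sub>R (m (m z y) (m a b) + m (m a y) (m b z) + m (m b y) (m a z) - m z (m y (m a b)) - m a (m y (m b z)) - m b (m y (m a z))) = 0"
    using E2_expand[of a b z y] by (simp add: AA0)
  hence "m (m z y) (m a b) + m (m a y) (m b z) + m (m b y) (m a z) - m z (m y (m a b)) - m a (m y (m b z)) - m b (m y (m a z)) = 0"
    by (simp only: scaleR_eq_0_iff) simp
  thus ?thesis by (simp add: algebra_simps)
qed

lemma pw_rec: "m (pw m x (Suc (Suc n))) u = 2 *\<^sub>R m (pw m x (Suc n)) (m x u) + m (m x x) (m (pw m x n) u)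
   - m (pw m x n) (m x (m x u)) - m x (m x (m (pw m x n) u))"
proof -
  have "m (m u x) (m (pw m x n) x) + m (m (pw m x n) x) (m x u) + m (m x x) (m (pw m x n) u) =
    m u (m x (m (pw m x n) x)) + m (pw m x n) (m x (m x u)) + m x (m x (m (pw m x n) u))"
    by (rule E2)
  moreover have "m (pw m x n) x = pw m x (Suc n)" by (simp add: comm)
  moreover have "m u x = m x u" by (simp add: comm)
  moreover have "m (m x u) (pw m x (Suc n)) = m (pw m x (Suc n)) (m x u)" by (simp add: comm)
  moreover have "m u (pw m x (Suc (Suc n))) = m (pw m x (Suc (Suc n))) u" by (simp add: comm)
  ultimately have "m (pw m x (Suc n)) (m x u) + m (pw m x (Suc n)) (m x u) + m (m x x) (m (pw m x n) u) =
    m (pw m x (Suc (Suc n))) u + m (pw m x n) (m x (m x u)) + m x (m x (m (pw m x n) u))"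
    by (simp only: pw.simps)
  thus ?thesis by (simp add: scaleR_2 algebra_simps)
qed

lemma step_comm:
  assumes lin: "linear G"
    and c0: "\<And>u. G (m x u) = m x (G u)"
    and c1: "\<And>u. G (m (m x x) u) = m (m x x) (G u)"
    and cn: "\<And>u. G (m (pw m x n) u) = m (pw m x n) (G u)"
    and cn1: "\<And>u. G (m (pw m x (Suc n)) u) = m (pw m x (Suc n)) (G u)"
  shows "G (m (pw m x (Suc (Suc n))) u) = m (pw m x (Suc (Suc n))) (G u)"
  unfolding pw_rec[of x n u] pw_rec[of x n "G u"]
  by (simp del: pw.simps add: linear_diff[OF lin] linear_add[OF lin] linear_scale[OF lin] c0 c1 cn cn1)

lemma linLm: "linear (m a)" using linR[of a] by (simp add: eta_contract_eq)

lemma c01: "m x (m (m x x) u) = m (m x x) (m x u)"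
  using jid[of x u] by (simp add: comm)

lemma pw_comm_base:
  "m x (m (pw m x n) u) = m (pw m x n) (m x u) \<and> m (m x x) (m (pw m x n) u) = m (pw m x n) (m (m x x) u)"
proof (induction n arbitrary: u rule: nat_less_induct)
  case (1 n)
  show ?case
  proof (cases n)
    case 0 thus ?thesis using c01 by simp
  next
    case (Suc k)
    show ?thesis
    proof (cases k)
      case 0 thus ?thesis using c01 Suc by simp
    next
      case (Suc j)
      have IH1: "\<And>u. m x (m (pw m x j) u) = m (pw m x j) (m x u)" "\<And>u. m (m x x) (m (pw m x j) u) = m (pw m x j) (m (m x x) u)"
        using 1 \<open>n = Suc k\<close> Suc by auto
      have IH2: "\<And>u. m x (m (pw m x (Suc j)) u) = m (pw m x (Suc j)) (m x u)" "\<And>u. m (m x x) (m (pw m x (Suc j)) u) = m (pw m x (Suc j)) (m (m x x) u)"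
        using 1 \<open>n = Suc k\<close> Suc by auto
      have "m x (m (pw m x (Suc (Suc j))) u) = m (pw m x (Suc (Suc j))) (m x u)"
        by (rule step_comm[OF linLm]) (use c01 IH1 IH2 in auto)
      moreover have "m (m x x) (m (pw m x (Suc (Suc j))) u) = m (pw m x (Suc (Suc j))) (m (m x x) u)"
        by (rule step_comm[OF linLm]) (use c01 IH1 IH2 in auto)
      ultimately show ?thesis using \<open>n = Suc k\<close> Suc by simp
    qed
  qed
qed

lemma pw_comm: "m (pw m x i) (m (pw m x n) u) = m (pw m x n) (m (pw m x i) u)"
proof (induction n arbitrary: u rule: nat_less_induct)
  case (1 n)
  show ?case
  proof (cases n)
    case 0 thus ?thesis using pw_comm_base[of x i] by simp
  next
    case (Suc k)
    show ?thesis
    proof (cases k)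
      case 0 thus ?thesis using pw_comm_base[of x i] Suc by simp
    next
      case (Suc j)
      have IH1: "\<And>u. m (pw m x i) (m (pw m x j) u) = m (pw m x j) (m (pw m x i) u)"
        using 1 \<open>n = Suc k\<close> Suc by auto
      have IH2: "\<And>u. m (pw m x i) (m (pw m x (Suc j)) u) = m (pw m x (Suc j)) (m (pw m x i) u)"
        using 1 \<open>n = Suc k\<close> Suc by auto
      have "m (pw m x i) (m (pw m x (Suc (Suc j))) u) = m (pw m x (Suc (Suc j))) (m (pw m x i) u)"
        by (rule step_comm[OF linLm]) (use pw_comm_base[of x i] IH1 IH2 in auto)
      thus ?thesis using \<open>n = Suc k\<close> Suc by simp
    qed
  qed
qed

lemma pw_mult: "m (pw m x i) (pw m x j) = pw m x (Suc (i + j))"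
proof (induction i)
  case 0 thus ?case by simp
next
  case (Suc i)
  have "m (pw m x (Suc i)) (pw m x j) = m (pw m x j) (m x (pw m x i))" by (simp add: comm)
  also have "\<dots> = m x (m (pw m x j) (pw m x i))" using pw_comm_base[of x j "pw m x i"] by simp
  also have "\<dots> = m x (pw m x (Suc (i + j)))" using Suc by (simp add: comm)
  finally show ?case by simp
qed

definition PP :: "'a \<Rightarrow> real poly \<Rightarrow> 'a" where
  "PP x s = (\<Sum>k<Suc (degree s). coeff s k *\<^sub>R pw m x k)"

lemma PP_sum: "degree s < K \<Longrightarrow> PP x s = (\<Sum>k<K. coeff s k *\<^sub>R pw m x k)"
  unfolding PP_def
  by (rule sum.mono_neutral_left) (auto simp: coeff_eq_0)

lemma PP_add: "PP x (f + g) = PP x f + PP x g"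
proof -
  define K where "K = Suc (max (degree f) (degree g))"
  have "degree (f + g) < K" unfolding K_def using degree_add_le_max[of f g] by simp
  moreover have "degree f < K" "degree g < K" unfolding K_def by auto
  ultimately show ?thesis by (simp add: PP_sum[where K=K] sum.distrib scaleR_add_left)
qed

lemma PP_smult: "PP x (smult c f) = c *\<^sub>R PP x f"
proof -
  have "degree (smult c f) < Suc (degree f)" "degree f < Suc (degree f)" by auto
  thus ?thesis by (simp only: PP_sum[where K="Suc (degree f)"] scaleR_sum_right coeff_smult scaleR_scaleR)
qed

lemma PP_0[simp]: "PP x 0 = 0" by (simp add: PP_def)

lemma PP_const: "PP x [:a:] = a *\<^sub>R x"
  by (simp add: PP_def)

lemma PP_shift: "PP x (pCons 0 f) = m x (PP x f)"
proof -
  have "degree (pCons 0 f) < Suc (Suc (degree f))" "degree f < Suc (degree f)"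
    by (auto simp: degree_pCons_le le_imp_less_Suc)
  hence "PP x (pCons 0 f) = (\<Sum>k<Suc (Suc (degree f)). coeff (pCons 0 f) k *\<^sub>R pw m x k)"
    "PP x f = (\<Sum>k<Suc (degree f). coeff f k *\<^sub>R pw m x k)" by (auto intro: PP_sum simp del: sum.lessThan_Suc)
  moreover have "(\<Sum>k<Suc (Suc (degree f)). coeff (pCons 0 f) k *\<^sub>R pw m x k)
     = (\<Sum>k<Suc (degree f). coeff f k *\<^sub>R pw m x (Suc k))"
    by (subst sum.lessThan_Suc_shift) (simp del: sum.lessThan_Suc)
  moreover have "m x (\<Sum>k<Suc (degree f). coeff f k *\<^sub>R pw m x k) = (\<Sum>k<Suc (degree f). coeff f k *\<^sub>R pw m x (Suc k))"
    by (simp del: sum.lessThan_Suc add: linear_sum[OF linLm] linear_scale[OF linLm])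
  ultimately show ?thesis by (simp del: sum.lessThan_Suc)
qed

lemma PP_pCons: "PP x (pCons a f) = a *\<^sub>R x + m x (PP x f)"
proof -
  have "pCons a f = [:a:] + pCons 0 f" by simp
  thus ?thesis by (metis PP_add PP_const PP_shift)
qed

lemma mPP_left: "m (PP x g) u = (\<Sum>k<Suc (degree g). coeff g k *\<^sub>R m (pw m x k) u)"
  unfolding PP_def
proof -
  have "m (\<Sum>k<Suc (degree g). coeff g k *\<^sub>R pw m x k) u = (\<Sum>k<Suc (degree g). m (coeff g k *\<^sub>R pw m x k) u)"
    using linear_sum[OF linL[of u]] by blast
  thus "m (\<Sum>k<Suc (degree g). coeff g k *\<^sub>R pw m x k) u = (\<Sum>k<Suc (degree g). coeff g k *\<^sub>R m (pw m x k) u)"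
    by (simp del: sum.lessThan_Suc)
qed

lemma PP_comm_x: "m (PP x g) (m x u) = m x (m (PP x g) u)"
proof -
  have "m (PP x g) (m x u) = (\<Sum>k<Suc (degree g). coeff g k *\<^sub>R m (pw m x k) (m x u))" by (rule mPP_left)
  also have "\<dots> = (\<Sum>k<Suc (degree g). coeff g k *\<^sub>R m x (m (pw m x k) u))"
    using pw_comm_base[of x] by (simp del: sum.lessThan_Suc)
  also have "\<dots> = m x (m (PP x g) u)"
    by (simp del: sum.lessThan_Suc add: mPP_left linear_sum[OF linLm] linear_scale[OF linLm])
  finally show ?thesis .
qed

lemma PP_mult: "m (PP x f) (PP x g) = PP x (pCons 0 (f * g))"
proof (induction f rule: pCons_induct)
  case 0 thus ?case by simp
next
  case (pCons a f)
  have "m (PP x (pCons a f)) (PP x g) = a *\<^sub>R m x (PP x g) + m (m x (PP x f)) (PP x g)"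
    by (simp add: PP_pCons)
  also have "m (m x (PP x f)) (PP x g) = m x (m (PP x f) (PP x g))"
    by (metis PP_comm_x comm)
  also have "\<dots> = PP x (pCons 0 (pCons 0 (f * g)))" using pCons by (simp add: PP_shift)
  also have "a *\<^sub>R m x (PP x g) = PP x (pCons 0 (smult a g))" by (simp add: PP_shift PP_smult)
  finally show ?case by (simp add: PP_add[symmetric])
qed

lemma PP_ideal: "PP x g = 0 \<Longrightarrow> PP x (h * g) = 0"
proof (induction h rule: pCons_induct)
  case 0 thus ?case by simp
next
  case (pCons a h)
  have "pCons a h * g = smult a g + pCons 0 (h * g)" by simp
  thus ?case using pCons by (simp add: PP_add PP_smult PP_shift)
qed

lemma PP_eig: "PP x ([:-l, 1:] * g) = 0 \<Longrightarrow> PP x (h * g) = poly h l *\<^sub>R PP x g"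
proof (induction h rule: pCons_induct)
  case 0 thus ?case by simp
next
  case (pCons a h)
  have e1: "pCons a h * g = smult a g + pCons 0 (h * g)" by simp
  have e2: "pCons 0 (h * g) = h * ([:-l, 1:] * g) + smult l (h * g)"
    by (simp add: algebra_simps)
  have "PP x (h * ([:-l, 1:] * g)) = 0" using PP_ideal pCons(3) by blast
  hence "PP x (pCons 0 (h * g)) = l *\<^sub>R PP x (h * g)" by (simp add: e2 PP_add PP_smult)
  thus ?case using pCons by (simp add: e1 PP_add PP_smult algebra_simps)
qed

end

locale jfr = jord +
  assumes FR: "formally_real m"
begin

lemma FRH: "(\<Sum>i<(n::nat). m (a i) (a i)) = 0 \<Longrightarrow> \<forall>i<n. a i = 0"
  using FR unfolding formally_real_def by blast

lemma sq0: "m a a = 0 \<Longrightarrow> a = 0"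
  using FR unfolding formally_real_def
  by (erule_tac x=1 in allE, erule_tac x="\<lambda>i. a" in allE) simp

lemma sq2: "m a a + m b b = 0 \<Longrightarrow> b = 0"
proof -
  assume h: "m a a + m b b = 0"
  have "(\<Sum>i<(2::nat). m ((\<lambda>i. if i = 0 then a else b) i) ((\<lambda>i. if i = 0 then a else b) i)) = 0"
    using h by (simp add: numeral_2_eq_2)
  hence "\<forall>i::nat<2. (\<lambda>i. if i = 0 then a else b) i = 0"
    by (rule FRH)
  from this[rule_format, of 1] show "b = 0" by simp
qed

lemma quad_false:
  assumes b: "\<beta> \<noteq> 0" and nz: "PP x f \<noteq> 0" and z: "PP x ([:\<alpha>^2 + \<beta>^2, -2*\<alpha>, 1:] * f) = 0"
  shows False
proof -
  define q where "q = [:\<alpha>^2 + \<beta>^2, -2*\<alpha>, 1:]"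
  define L where "L = [:-\<alpha>, 1:]"
  define u where "u = smult (1/\<beta>) (L * f)"
  have qe: "q = L * L + [:\<beta>^2:]"
    unfolding q_def L_def by (simp add: algebra_simps power2_eq_square)
  have e1: "f * (q * f) = L * L * (f * f) + smult (\<beta>^2) (f * f)"
    unfolding qe L_def by (simp add: algebra_simps smult_add_left)
  have e2: "u * u = smult (1/\<beta>^2) (L * L * (f * f))"
    unfolding u_def by (simp add: mult_smult_left mult_smult_right power2_eq_square ac_simps)
  have "u * u + f * f = smult (1/\<beta>^2) (f * (q * f))"
    unfolding e1 e2 using b by (simp add: smult_add_right)
  hence "m (PP x u) (PP x u) + m (PP x f) (PP x f) = PP x (pCons 0 (smult (1/\<beta>^2) f) * (q * f))"
    by (simp add: PP_mult PP_add[symmetric] algebra_simps)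
  also have "\<dots> = 0" using PP_ideal z q_def by blast
  finally show False using sq2 nz by blast
qed

lemma root_ex: "s \<noteq> 0 \<Longrightarrow> PP x g \<noteq> 0 \<Longrightarrow> PP x (s * g) = 0 \<Longrightarrow>
   \<exists>f l. PP x f \<noteq> 0 \<and> PP x ([:-l, 1:] * f) = 0"
proof (induction "degree s" arbitrary: s rule: less_induct)
  case less
  show ?case
  proof (cases "degree s = 0")
    case True
    then obtain c where c: "s = [:c:]" by (metis degree_eq_zeroE)
    with less have "c \<noteq> 0" by auto
    moreover have "PP x (s * g) = c *\<^sub>R PP x g" using c by (simp add: PP_smult)
    ultimately show ?thesis using less by simp
  next
    case False
    let ?cs = "map_poly complex_of_real s"
    have "degree ?cs = degree s" by (simp add: degree_map_poly)
    hence "\<not> constant (poly ?cs)" using False constant_degree by metis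
    then obtain z where z: "poly ?cs z = 0" using fundamental_theorem_of_algebra by blast
    show ?thesis
    proof (cases "Im z = 0")
      case True
      define l where "l = Re z"
      have "z = of_real l" using True unfolding l_def by (simp add: complex_eq_iff)
      hence "poly s l = 0" using z mp_poly_real by (metis of_real_eq_0_iff)
      then obtain s1 where s1: "s = [:-l,1:] * s1" using poly_eq_0_iff_dvd by (metis dvdE)
      have s1nz: "s1 \<noteq> 0" using less s1 by auto
      have deg: "degree s1 < degree s" unfolding s1 using s1nz by (subst degree_mult_eq) auto
      show ?thesis
      proof (cases "PP x (s1 * g) = 0")
        case True thus ?thesis using less.hyps[OF deg s1nz less.prems(2) True] by blast
      next
        case False
        thus ?thesis using less.prems(3) s1 by (metis mult.assoc)
      qed
    next
      case False
      define q where "q = [:(Re z)^2 + (Im z)^2, -2*Re z, 1:]"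
      have qnz: "q \<noteq> 0" by (simp add: q_def)
      have dq: "degree q = 2" by (simp add: q_def)
      define r where "r = s mod q"
      define s1 where "s1 = s div q"
      have sd: "s = q * s1 + r" by (simp add: r_def s1_def)
      have "poly (map_poly complex_of_real q) z = 0" unfolding q_def by (rule quad_root)
      hence pr: "poly (map_poly complex_of_real r) z = 0"
        using z sd by (metis mp_add mp_mult poly_add poly_mult mult_zero_left add_0)
      have "r = 0"
      proof (cases "r = 0")
        case False
        hence "degree r < 2" using degree_mod_less[OF qnz, of s] dq r_def by simp
        hence rf: "r = [:coeff r 0, coeff r 1:]" by (rule deg1_form)
        have "complex_of_real (coeff r 0) + z * complex_of_real (coeff r 1) = 0"
          using pr by (subst (asm) rf) (simp add: map_poly_pCons)
        hence "Im z * coeff r 1 = 0" "coeff r 0 + Re z * coeff r 1 = 0"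
          by (auto simp: complex_eq_iff)
        hence "coeff r 1 = 0" "coeff r 0 = 0" using \<open>Im z \<noteq> 0\<close> by auto
        thus ?thesis using rf by simp
      qed
      hence s1e: "s = q * s1" using sd by simp
      have s1nz: "s1 \<noteq> 0" using less s1e by auto
      have deg: "degree s1 < degree s" using s1e s1nz qnz dq by (simp add: degree_mult_eq)
      show ?thesis
      proof (cases "PP x (s1 * g) = 0")
        case True thus ?thesis using less.hyps[OF deg s1nz less.prems(2) True] by blast
      next
        case False
        have "PP x (q * (s1 * g)) = 0" using less.prems(3) s1e by (metis mult.assoc)
        thus ?thesis using quad_false[OF \<open>Im z \<noteq> 0\<close> False] q_def by blast
      qed
    qed
  qed
qed

lemma PP_monom: "PP x (monom c k) = c *\<^sub>R pw m x k"
proof -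
  have "degree (monom c k) < Suc k" by (simp add: degree_monom_le le_imp_less_Suc)
  hence "PP x (monom c k) = (\<Sum>j<Suc k. coeff (monom c k) j *\<^sub>R pw m x j)" by (rule PP_sum)
  also have "\<dots> = (\<Sum>j<Suc k. (if j = k then c *\<^sub>R pw m x k else 0))"
    by (rule sum.cong) (auto simp: coeff_monom)
  also have "\<dots> = c *\<^sub>R pw m x k" by (simp del: sum.lessThan_Suc)
  finally show ?thesis .
qed

lemma PP_diff: "PP x (f - g) = PP x f - PP x g"
proof -
  have "f - g = f + smult (-1) g" by simp
  thus ?thesis by (simp only: PP_add PP_smult) simp
qed

lemma ann_ex:
  assumes fB: "finite (B::'a set)" and sB: "span B = UNIV"
  shows "\<exists>s. s \<noteq> 0 \<and> PP x s = 0"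
proof (cases "inj_on (pw m x) {..card B}")
  case False
  then obtain i j where ij: "i \<noteq> j" "pw m x i = pw m x j" unfolding inj_on_def by blast
  have "monom 1 i - monom (1::real) j \<noteq> 0"
  proof
    assume "monom 1 i - monom (1::real) j = 0"
    hence "coeff (monom 1 i - monom (1::real) j) i = 0" by simp
    thus False using ij by (simp add: coeff_monom)
  qed
  moreover have "PP x (monom 1 i - monom 1 j) = 0" using ij by (simp add: PP_diff PP_monom)
  ultimately show ?thesis by blast
next
  case True
  define S where "S = pw m x ` {..card B}"
  have fS: "finite S" unfolding S_def by simp
  have cS: "card S = Suc (card B)" unfolding S_def using card_image[OF True] by simp
  have "dependent S"
  proof (rule ccontr)
    assume "independent S"
    hence "card S \<le> card B" using real_vector.independent_span_bound[OF fB \<open>independent S\<close>] sB by auto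
    thus False using cS by simp
  qed
  then obtain u where u: "\<exists>v\<in>S. u v \<noteq> 0" "(\<Sum>v\<in>S. u v *\<^sub>R v) = 0"
    using real_vector.dependent_finite[OF fS] by blast
  define s where "s = (\<Sum>k\<le>card B. monom (u (pw m x k)) k)"
  have cs: "coeff s k = (if k \<le> card B then u (pw m x k) else 0)" for k
    unfolding s_def by (simp add: coeff_sum coeff_monom)
  obtain k where k: "k \<le> card B" "u (pw m x k) \<noteq> 0" using u(1) unfolding S_def by blast
  have "s \<noteq> 0" using cs[of k] k by auto
  have dg: "degree s < Suc (card B)"
  proof -
    have "degree s \<le> card B" by (rule degree_le) (simp add: cs)
    thus ?thesis by simp
  qed
  have "PP x s = (\<Sum>k<Suc (card B). coeff s k *\<^sub>R pw m x k)" using dg by (rule PP_sum)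
  also have "\<dots> = (\<Sum>k\<le>card B. u (pw m x k) *\<^sub>R pw m x k)"
    using cs by (simp add: lessThan_Suc_atMost del: sum.lessThan_Suc)
  also have "\<dots> = (\<Sum>v\<in>S. u v *\<^sub>R v)" unfolding S_def
    by (simp add: sum.reindex[OF True])
  also have "\<dots> = 0" by (rule u(2))
  finally show ?thesis using \<open>s \<noteq> 0\<close> by blast
qed

end

context jfr begin

lemma idem_ex:
  assumes fB: "finite (B::'a set)" and sB: "span B = UNIV" and w: "w \<noteq> 0"
  shows "\<exists>c l. c \<noteq> 0 \<and> m c c = c \<and> m w c = l *\<^sub>R c \<and> l \<noteq> 0"
proof -
  obtain s where s: "s \<noteq> 0" "PP w s = 0" using ann_ex[OF fB sB] by blast
  have "PP w 1 = w" using PP_const[of w 1] by (simp add: one_pCons)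
  then obtain f l where fl: "PP w f \<noteq> 0" "PP w ([:-l, 1:] * f) = 0"
    using root_ex[of s w 1] s w by auto
  define e where "e = PP w f"
  have ee: "m e e = (l * poly f l) *\<^sub>R e"
  proof -
    have "m e e = PP w (pCons 0 f * f)" unfolding e_def by (simp add: PP_mult)
    also have "\<dots> = poly (pCons 0 f) l *\<^sub>R e" unfolding e_def by (rule PP_eig[OF fl(2)])
    finally show ?thesis by simp
  qed
  have we: "m w e = l *\<^sub>R e"
  proof -
    have "m w e = PP w ([:0, 1:] * f)" unfolding e_def by (simp add: PP_shift)
    also have "\<dots> = poly [:0, 1:] l *\<^sub>R e" unfolding e_def by (rule PP_eig[OF fl(2)])
    finally show ?thesis by simp
  qed
  define \<kappa> where "\<kappa> = l * poly f l"
  have enz: "e \<noteq> 0" using fl(1) unfolding e_def .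
  have kz: "\<kappa> \<noteq> 0"
  proof
    assume "\<kappa> = 0"
    hence "m e e = 0" using ee \<kappa>_def by simp
    thus False using sq0 enz by blast
  qed
  hence lz: "l \<noteq> 0" unfolding \<kappa>_def by auto
  define c where "c = (1/\<kappa>) *\<^sub>R e"
  have "c \<noteq> 0" using kz enz unfolding c_def by simp
  moreover have "m c c = c" unfolding c_def using kz ee \<kappa>_def by (simp add: power2_eq_square)
  moreover have "m w c = l *\<^sub>R c" unfolding c_def using we by simp
  ultimately show ?thesis using lz by blast
qed

end


definition tr :: "'a::real_vector set \<Rightarrow> ('a \<Rightarrow> 'a) \<Rightarrow> real" where
  "tr B f = (\<Sum>b\<in>B. representation B (f b) b)"

locale fbasis =
  fixes B :: "'a::real_vector set"
  assumes fin: "finite B" and ind: "independent B" and sp: "span B = UNIV"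
begin

lemma rep_lin: "linear (\<lambda>v. representation B v b)"
  by (rule linearI) (simp_all add: real_vector.representation_add[OF ind] real_vector.representation_scale[OF ind] sp)

lemma rep_sum: "(\<Sum>b\<in>B. representation B v b *\<^sub>R b) = v"
  using real_vector.sum_representation_eq[OF ind _ fin subset_refl] sp by simp

lemma sys2_eq:
  assumes fI: "finite I" and fJ: "finite J"
    and l1: "\<And>i. i \<in> I \<Longrightarrow> linear (\<phi>1 i)" and l2: "\<And>j. j \<in> J \<Longrightarrow> linear (\<phi>2 j)"
    and rec: "\<And>w. w = (\<Sum>i\<in>I. \<phi>1 i w *\<^sub>R e1 i) + (\<Sum>j\<in>J. \<phi>2 j w *\<^sub>R e2 j)"
    and lf: "linear f"
  shows "(\<Sum>i\<in>I. \<phi>1 i (f (e1 i))) + (\<Sum>j\<in>J. \<phi>2 j (f (e2 j))) = tr B f"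
proof -
  let ?r = "\<lambda>v b. representation B v b"
  have "tr B f = (\<Sum>b\<in>B. ?r (f ((\<Sum>i\<in>I. \<phi>1 i b *\<^sub>R e1 i) + (\<Sum>j\<in>J. \<phi>2 j b *\<^sub>R e2 j))) b)"
  proof -
    have "?r (f b) b = ?r (f ((\<Sum>i\<in>I. \<phi>1 i b *\<^sub>R e1 i) + (\<Sum>j\<in>J. \<phi>2 j b *\<^sub>R e2 j))) b" for b
      by (rule arg_cong[where f="\<lambda>v. ?r (f v) b", OF rec])
    thus ?thesis unfolding tr_def by (rule sum.cong[OF refl])
  qed
  also have "\<dots> = (\<Sum>b\<in>B. (\<Sum>i\<in>I. \<phi>1 i b * ?r (f (e1 i)) b) + (\<Sum>j\<in>J. \<phi>2 j b * ?r (f (e2 j)) b))"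
    by (simp add: linear_add[OF lf] linear_sum[OF lf] linear_scale[OF lf]
        linear_add[OF rep_lin] linear_sum[OF rep_lin] linear_scale[OF rep_lin])
  also have "\<dots> = (\<Sum>i\<in>I. \<Sum>b\<in>B. ?r (f (e1 i)) b * \<phi>1 i b) + (\<Sum>j\<in>J. \<Sum>b\<in>B. ?r (f (e2 j)) b * \<phi>2 j b)"
    by (simp only: sum.distrib sum.swap[of _ B] mult.commute[of "\<phi>1 _ _"] mult.commute[of "\<phi>2 _ _"])
  also have "\<dots> = (\<Sum>i\<in>I. \<phi>1 i (\<Sum>b\<in>B. ?r (f (e1 i)) b *\<^sub>R b)) + (\<Sum>j\<in>J. \<phi>2 j (\<Sum>b\<in>B. ?r (f (e2 j)) b *\<^sub>R b))"
  proof -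
    have "\<phi>1 i (\<Sum>b\<in>B. ?r (f (e1 i)) b *\<^sub>R b) = (\<Sum>b\<in>B. ?r (f (e1 i)) b * \<phi>1 i b)" if "i \<in> I" for i
      by (simp add: linear_sum[OF l1[OF that]] linear_scale[OF l1[OF that]])
    moreover have "\<phi>2 j (\<Sum>b\<in>B. ?r (f (e2 j)) b *\<^sub>R b) = (\<Sum>b\<in>B. ?r (f (e2 j)) b * \<phi>2 j b)" if "j \<in> J" for j
      by (simp add: linear_sum[OF l2[OF that]] linear_scale[OF l2[OF that]])
    ultimately show ?thesis by simp
  qed
  also have "\<dots> = (\<Sum>i\<in>I. \<phi>1 i (f (e1 i))) + (\<Sum>j\<in>J. \<phi>2 j (f (e2 j)))"
    by (simp add: rep_sum)
  finally show ?thesis by simp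
qed

lemma tr_comm:
  assumes "linear f" "linear g"
  shows "tr B (\<lambda>v. f (g v)) = tr B (\<lambda>v. g (f v))"
proof -
  let ?r = "\<lambda>v b. representation B v b"
  have A: "tr B (\<lambda>v. f (g v)) = (\<Sum>b\<in>B. \<Sum>c\<in>B. ?r (g b) c * ?r (f c) b)"
    if lf: "linear f" for f g :: "'a \<Rightarrow> 'a"
  proof -
    have "tr B (\<lambda>v. f (g v)) = (\<Sum>b\<in>B. ?r (f (\<Sum>c\<in>B. ?r (g b) c *\<^sub>R c)) b)"
      unfolding tr_def by (simp add: rep_sum)
    also have "\<dots> = (\<Sum>b\<in>B. \<Sum>c\<in>B. ?r (g b) c * ?r (f c) b)"
      by (simp add: linear_sum[OF lf] linear_scale[OF lf] linear_sum[OF rep_lin] linear_scale[OF rep_lin])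
    finally show ?thesis .
  qed
  show ?thesis unfolding A[OF assms(1)] A[OF assms(2)]
    by (subst sum.swap) (simp add: mult.commute)
qed

lemma tr_add: "linear f \<Longrightarrow> linear g \<Longrightarrow> tr B (\<lambda>v. f v + g v) = tr B f + tr B g"
  unfolding tr_def by (simp add: linear_add[OF rep_lin] sum.distrib)

lemma tr_diff: "tr B (\<lambda>v. f v - g v) = tr B f - tr B g"
  unfolding tr_def by (simp add: linear_diff[OF rep_lin] sum_subtractf)

lemma tr_scale: "tr B (\<lambda>v. c *\<^sub>R f v) = c * tr B f"
  unfolding tr_def by (simp add: linear_scale[OF rep_lin] sum_distrib_left)

lemma tr_idem:
  assumes lP: "linear P" and idem: "\<And>v. P (P v) = P v"
  shows "\<exists>U::'a set. finite U \<and> tr B P = real (card U) \<and> ((\<exists>v. P v \<noteq> 0) \<longrightarrow> U \<noteq> {})"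
proof -
  obtain U where U: "U \<subseteq> P ` B" "independent U" "P ` B \<subseteq> span U"
    by (rule real_vector.maximal_independent_subset)
  have fU: "finite U" using U(1) fin finite_subset by blast
  have spU: "P v \<in> span U" for v
  proof -
    have "P v = P (\<Sum>b\<in>B. representation B v b *\<^sub>R b)" by (simp add: rep_sum)
    also have "\<dots> = (\<Sum>b\<in>B. representation B v b *\<^sub>R P b)"
      by (simp add: linear_sum[OF lP] linear_scale[OF lP])
    also have "\<dots> \<in> span U"
      by (rule real_vector.span_sum, rule real_vector.span_scale) (use U(3) in blast)
    finally show ?thesis .
  qed
  have PU: "u \<in> U \<Longrightarrow> P u = u" for u using U(1) idem by blast
  define \<phi>1 where "\<phi>1 = (\<lambda>u w. representation U (P w) u)"
  define \<phi>2 where "\<phi>2 = (\<lambda>b w. representation B (w - P w) b)"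
  have l1: "linear (\<phi>1 u)" for u
    unfolding \<phi>1_def
    by (rule linearI) (simp_all add: linear_add[OF lP] linear_scale[OF lP]
        real_vector.representation_add[OF U(2) spU spU] real_vector.representation_scale[OF U(2) spU])
  have l2: "linear (\<phi>2 b)" for b
    unfolding \<phi>2_def
  proof (rule linearI)
    fix x y
    have "x + y - P (x + y) = (x - P x) + (y - P y)" by (simp add: linear_add[OF lP])
    thus "representation B (x + y - P (x + y)) b = representation B (x - P x) b + representation B (y - P y) b"
      by (simp only: linear_add[OF rep_lin])
  next
    fix r x
    have "r *\<^sub>R x - P (r *\<^sub>R x) = r *\<^sub>R (x - P x)" by (simp add: linear_scale[OF lP] scaleR_diff_right)
    thus "representation B (r *\<^sub>R x - P (r *\<^sub>R x)) b = r *\<^sub>R representation B (x - P x) b"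
      by (simp add: linear_scale[OF rep_lin])
  qed
  have rec: "w = (\<Sum>u\<in>U. \<phi>1 u w *\<^sub>R u) + (\<Sum>b\<in>B. \<phi>2 b w *\<^sub>R (b - P b))" for w
  proof -
    have a: "(\<Sum>u\<in>U. \<phi>1 u w *\<^sub>R u) = P w" unfolding \<phi>1_def
      using real_vector.sum_representation_eq[OF U(2) spU fU subset_refl] by simp
    have "(\<Sum>b\<in>B. \<phi>2 b w *\<^sub>R (b - P b)) = (\<Sum>b\<in>B. \<phi>2 b w *\<^sub>R b) - P (\<Sum>b\<in>B. \<phi>2 b w *\<^sub>R b)"
      by (simp add: linear_sum[OF lP] linear_scale[OF lP] scaleR_diff_right sum_subtractf)
    also have "(\<Sum>b\<in>B. \<phi>2 b w *\<^sub>R b) = w - P w" unfolding \<phi>2_def by (rule rep_sum)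
    finally have b: "(\<Sum>b\<in>B. \<phi>2 b w *\<^sub>R (b - P b)) = w - P w"
      by (simp add: linear_diff[OF lP] idem)
    show ?thesis using a b by simp
  qed
  have "(\<Sum>u\<in>U. \<phi>1 u (P u)) + (\<Sum>b\<in>B. \<phi>2 b (P (b - P b))) = tr B P"
    by (rule sys2_eq[OF fU fin l1 l2 rec lP])
  moreover have "\<phi>1 u (P u) = 1" if "u \<in> U" for u
    unfolding \<phi>1_def using that PU real_vector.representation_basis[OF U(2) that] by simp
  moreover have "\<phi>2 b (P (b - P b)) = 0" for b
    unfolding \<phi>2_def by (simp add: linear_diff[OF lP] idem real_vector.representation_zero linear_0[OF lP])
  ultimately have "tr B P = real (card U)" by simp
  moreover have "U \<noteq> {}" if "P v \<noteq> 0" for v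
    using spU[of v] that by auto
  ultimately show ?thesis using fU by (intro exI[of _ U]) blast
qed

end


locale jfb = jfr m + fbasis B for m :: "'a::real_vector \<Rightarrow> 'a \<Rightarrow> 'a" and B :: "'a set"
begin

definition psi :: "'a \<Rightarrow> real" where "psi a = tr B (m a)"

lemma psi_add: "psi (a + b) = psi a + psi b"
proof -
  have "m (a + b) = (\<lambda>z. m a z + m b z)" by auto
  thus ?thesis unfolding psi_def using tr_add[OF linLm linLm, of a b] by (simp add: eta_contract_eq)
qed

lemma psi_scale: "psi (r *\<^sub>R a) = r * psi a"
proof -
  have "m (r *\<^sub>R a) = (\<lambda>z. r *\<^sub>R m a z)" by auto
  thus ?thesis unfolding psi_def using tr_scale[of r "m a"] by simp
qed

lemma psi_diff: "psi (a - b) = psi a - psi b"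
  using psi_add[of "a - b" b] by simp

lemma psi_der: assumes "derivation m D" shows "psi (D a) = 0"
proof -
  have lD: "linear D" and dD: "\<And>x y. D (m x y) = m (D x) y + m x (D y)"
    using assms unfolding derivation_def by auto
  have "m (D a) = (\<lambda>z. D (m a z) - m a (D z))" using dD by (auto simp: algebra_simps)
  hence "psi (D a) = tr B (\<lambda>z. D (m a z)) - tr B (\<lambda>z. m a (D z))" unfolding psi_def by (simp add: tr_diff)
  also have "\<dots> = 0" using tr_comm[OF lD linLm[of a]] by simp
  finally show ?thesis .
qed

lemma peirce3: "m c c = c \<Longrightarrow> 2 *\<^sub>R m c (m c (m c z)) = 3 *\<^sub>R m c (m c z) - m c z"
proof -
  assume cc: "m c c = c"
  have "m (m z c) (m c c) + 2 *\<^sub>R m (m c c) (m c z) = m z (m c (m c c)) + 2 *\<^sub>R m c (m c (m c z))"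
    by (rule E1)
  hence "m c (m c z) + 2 *\<^sub>R m c (m c z) = m c z + 2 *\<^sub>R m c (m c (m c z))"
    using cc by (simp add: comm[of z c] comm[of "m c z" c])
  moreover have "3 *\<^sub>R m c (m c z) = m c (m c z) + 2 *\<^sub>R m c (m c z)"
    using scaleR_add_left[of 1 2 "m c (m c z)"] by simp
  ultimately show ?thesis by simp
qed


definition lc :: "'a \<Rightarrow> 'a \<Rightarrow> real \<Rightarrow> real \<Rightarrow> 'a" where
  "lc c z a b = a *\<^sub>R m c z + b *\<^sub>R m c (m c z)"

lemma lc_add: "lc c z a b + lc c z a' b' = lc c z (a + a') (b + b')"
  unfolding lc_def by (simp add: algebra_simps)
lemma lc_diff: "lc c z a b - lc c z a' b' = lc c z (a - a') (b - b')"
  unfolding lc_def by (simp add: algebra_simps)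
lemma lc_scale: "r *\<^sub>R lc c z a b = lc c z (r * a) (r * b)"
  unfolding lc_def by (simp add: algebra_simps)
lemma lc_T: "m c c = c \<Longrightarrow> m c (lc c z a b) = lc c z (- b / 2) (a + 3 * b / 2)"
proof -
  assume cc: "m c c = c"
  have h: "m c (m c (m c z)) = (3/2) *\<^sub>R m c (m c z) - (1/2) *\<^sub>R m c z"
    using arg_cong[OF peirce3[OF cc, of z], of "\<lambda>v. (1/2) *\<^sub>R v"] by (simp add: scaleR_diff_right)
  show ?thesis unfolding lc_def by (simp add: h algebra_simps)
qed
lemma lc_0: "m c z = lc c z 1 0" unfolding lc_def by simp
lemma lc_1: "m c (m c z) = lc c z 0 1" unfolding lc_def by simp

lemma peirce_idem:
  assumes cc: "m c c = c"
  shows "2 *\<^sub>R m c (m c (2 *\<^sub>R m c (m c z) - m c z)) - m c (2 *\<^sub>R m c (m c z) - m c z) = 2 *\<^sub>R m c (m c z) - m c z"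
    and "4 *\<^sub>R m c (4 *\<^sub>R m c z - 4 *\<^sub>R m c (m c z)) - 4 *\<^sub>R m c (m c (4 *\<^sub>R m c z - 4 *\<^sub>R m c (m c z))) = 4 *\<^sub>R m c z - 4 *\<^sub>R m c (m c z)"
proof -
  have e1: "2 *\<^sub>R m c (m c z) - m c z = lc c z (-1) 2" by (simp add: lc_def)
  have e2: "4 *\<^sub>R m c z - 4 *\<^sub>R m c (m c z) = lc c z 4 (-4)" by (simp add: lc_def)
  show "2 *\<^sub>R m c (m c (2 *\<^sub>R m c (m c z) - m c z)) - m c (2 *\<^sub>R m c (m c z) - m c z) = 2 *\<^sub>R m c (m c z) - m c z"
    unfolding e1 by (simp add: lc_T[OF cc] lc_scale lc_diff)
  show "4 *\<^sub>R m c (4 *\<^sub>R m c z - 4 *\<^sub>R m c (m c z)) - 4 *\<^sub>R m c (m c (4 *\<^sub>R m c z - 4 *\<^sub>R m c (m c z))) = 4 *\<^sub>R m c z - 4 *\<^sub>R m c (m c z)"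
    unfolding e2 by (simp add: lc_T[OF cc] lc_scale lc_diff)
qed


lemma psi_idem_pos:
  assumes cc: "m c c = c" and cnz: "c \<noteq> 0"
  shows "psi c > 0"
proof -
  define P1 where "P1 = (\<lambda>z. 2 *\<^sub>R m c (m c z) - m c z)"
  define Ph where "Ph = (\<lambda>z. 4 *\<^sub>R m c z - 4 *\<^sub>R m c (m c z))"
  have lP1: "linear P1" unfolding P1_def by (rule linearI) (simp_all add: algebra_simps)
  have lPh: "linear Ph" unfolding Ph_def by (rule linearI) (simp_all add: algebra_simps)
  have lPh2: "linear (\<lambda>z. (1/2) *\<^sub>R Ph z)" unfolding Ph_def by (rule linearI) (simp_all add: algebra_simps)
  have i1: "P1 (P1 z) = P1 z" for z unfolding P1_def using peirce_idem(1)[OF cc] by simp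
  have i2: "Ph (Ph z) = Ph z" for z unfolding Ph_def using peirce_idem(2)[OF cc] by simp
  have dec: "m c = (\<lambda>z. P1 z + (1/2) *\<^sub>R Ph z)"
  proof
    fix z
    show "m c z = P1 z + (1/2) *\<^sub>R Ph z" unfolding P1_def Ph_def
      by (simp only: lc_0[of c z] lc_T[OF cc] lc_scale lc_add lc_diff) simp
  qed
  have "psi c = tr B P1 + (1/2) * tr B Ph"
    unfolding psi_def dec by (simp only: tr_add[OF lP1 lPh2] tr_scale)
  moreover obtain U1 :: "'a set" where U1: "finite U1 \<and> tr B P1 = real (card U1) \<and> ((\<exists>v. P1 v \<noteq> 0) \<longrightarrow> U1 \<noteq> {})"
    using tr_idem[OF lP1 i1] by blast
  moreover obtain U2 :: "'a set" where U2: "finite U2 \<and> tr B Ph = real (card U2) \<and> ((\<exists>v. Ph v \<noteq> 0) \<longrightarrow> U2 \<noteq> {})"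
    using tr_idem[OF lPh i2] by blast
  moreover have "P1 c = c" unfolding P1_def using cc by (simp add: scaleR_2)
  ultimately show ?thesis
  proof -
    assume a: "psi c = tr B P1 + (1/2) * tr B Ph"
      "finite U1 \<and> tr B P1 = real (card U1) \<and> ((\<exists>v. P1 v \<noteq> 0) \<longrightarrow> U1 \<noteq> {})"
      "finite U2 \<and> tr B Ph = real (card U2) \<and> ((\<exists>v. Ph v \<noteq> 0) \<longrightarrow> U2 \<noteq> {})"
      "P1 c = c"
    hence "U1 \<noteq> {}" "finite U1" using cnz by auto
    hence "card U1 > 0" by (simp add: card_gt_0_iff)
    thus ?thesis using a by simp
  qed
qed
lemma nondeg:
  assumes w: "w \<noteq> 0"
  shows "\<exists>z. psi (m w z) \<noteq> 0"
proof -
  obtain c l where c: "c \<noteq> 0" "m c c = c" "m w c = l *\<^sub>R c" "l \<noteq> 0"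
    using idem_ex[OF fin sp w] by blast
  have "psi (m w c) = l * psi c" using c by (simp add: psi_scale)
  moreover have "psi c > 0" using psi_idem_pos c by blast
  ultimately show ?thesis using c(4) by (intro exI[of _ c]) simp
qed


lemma skew: assumes "derivation m D" shows "psi (m (D x) y) = - psi (m x (D y))"
proof -
  have "D (m x y) = m (D x) y + m x (D y)" using assms unfolding derivation_def by blast
  hence "0 = psi (m (D x) y) + psi (m x (D y))" using psi_der[OF assms, of "m x y"] by (simp add: psi_add)
  thus ?thesis by simp
qed

lemma main:
  assumes tl: "two_local_derivation m \<Delta>"
  shows "derivation m \<Delta>"
proof -
  have ex: "\<exists>D. derivation m D \<and> \<Delta> x = D x \<and> \<Delta> y = D y" for x y
    using tl unfolding two_local_derivation_def by blast
  have sk: "psi (m (\<Delta> x) y) = - psi (m x (\<Delta> y))" for x y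
  proof -
    obtain D where D: "derivation m D" "\<Delta> x = D x" "\<Delta> y = D y" using ex by blast
    thus ?thesis using skew[OF D(1)] by simp
  qed
  have hom: "\<Delta> (r *\<^sub>R x) = r *\<^sub>R \<Delta> x" for r x
  proof -
    obtain D where D: "derivation m D" "\<Delta> x = D x" "\<Delta> (r *\<^sub>R x) = D (r *\<^sub>R x)" using ex by blast
    hence "linear D" unfolding derivation_def by blast
    thus ?thesis using D linear_scale by metis
  qed
  have add: "\<Delta> (x + y) = \<Delta> x + \<Delta> y" for x y
  proof (rule ccontr)
    assume "\<Delta> (x + y) \<noteq> \<Delta> x + \<Delta> y"
    hence "\<Delta> (x + y) - \<Delta> x - \<Delta> y \<noteq> 0" by (simp add: algebra_simps)
    then obtain z where z: "psi (m (\<Delta> (x + y) - \<Delta> x - \<Delta> y) z) \<noteq> 0" using nondeg by blast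
    have "psi (m (\<Delta> (x + y) - \<Delta> x - \<Delta> y) z) = psi (m (\<Delta> (x + y)) z) - psi (m (\<Delta> x) z) - psi (m (\<Delta> y) z)"
      by (simp add: psi_diff)
    also have "\<dots> = - psi (m (x + y) (\<Delta> z)) + psi (m x (\<Delta> z)) + psi (m y (\<Delta> z))"
      by (simp add: sk)
    also have "\<dots> = 0" by (simp add: psi_add)
    finally show False using z by simp
  qed
  have lin: "linear \<Delta>" by (rule linearI) (simp_all add: add hom)
  have sq: "\<Delta> (m x x) = 2 *\<^sub>R m x (\<Delta> x)" for x
  proof -
    obtain D where D: "derivation m D" "\<Delta> x = D x" "\<Delta> (m x x) = D (m x x)" using ex by blast
    hence "D (m x x) = m (D x) x + m x (D x)" unfolding derivation_def by blast
    thus ?thesis using D by (simp add: comm[of "D x" x] scaleR_2)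
  qed
  have "\<Delta> (m x y) = m (\<Delta> x) y + m x (\<Delta> y)" for x y
  proof -
    have "\<Delta> (m (x + y) (x + y)) = 2 *\<^sub>R m (x + y) (\<Delta> (x + y))" by (rule sq)
    hence "\<Delta> (m x x) + 2 *\<^sub>R \<Delta> (m x y) + \<Delta> (m y y) =
       2 *\<^sub>R m x (\<Delta> x) + 2 *\<^sub>R m x (\<Delta> y) + 2 *\<^sub>R m y (\<Delta> x) + 2 *\<^sub>R m y (\<Delta> y)"
      by (simp add: add hom comm[of y x] scaleR_2 algebra_simps)
    hence "2 *\<^sub>R \<Delta> (m x y) = 2 *\<^sub>R m x (\<Delta> y) + 2 *\<^sub>R m y (\<Delta> x)"
      by (simp add: sq algebra_simps)
    hence "\<Delta> (m x y) = m x (\<Delta> y) + m y (\<Delta> x)"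
      by (metis scaleR_right_distrib scaleR_cancel_left zero_neq_numeral)
    thus ?thesis by (simp add: comm[of y] add.commute)
  qed
  thus ?thesis using lin unfolding derivation_def by blast
qed

end

theorem theorem5p3:
  fixes m :: "'a::real_vector \<Rightarrow> 'a \<Rightarrow> 'a" and \<Delta> :: "'a \<Rightarrow> 'a"
  assumes "jordan_algebra m"
    and "finite_dimensional_space TYPE('a)"
    and "formally_real m"
    and "two_local_derivation m \<Delta>"
  shows "derivation m \<Delta>"
proof -
  obtain B0 :: "'a set" where B0: "finite B0" "span B0 = UNIV"
    using assms(2) unfolding finite_dimensional_space_def by blast
  obtain B where B: "B \<subseteq> B0" "independent B" "B0 \<subseteq> span B"
    by (rule real_vector.maximal_independent_subset)
  have fB: "finite B" using B(1) B0(1) finite_subset by blast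
  have "span B = UNIV" using B0(2) B(3) by (metis real_vector.span_mono real_vector.span_span top.extremum_uniqueI)
  then interpret jfb m B
    using assms(1,3) fB B(2) by unfold_locales (simp_all add: jord_def jfr_axioms_def)
  show ?thesis by (rule main[OF assms(4)])
qed

end
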